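(* There is no $(3,2)$-critical graph that contains exactly three odd cycles.
   Context: All graphs are finite and simple. An odd cycle is a cycle (subgraph) of odd length. For a graph $G$, ${\rm es}_{\chi}(G)$ is the minimum number of edges of $G$ whose removal results in a spanning subgraph $G_1$ with $\chi(G_1)=\chi(G)-1$. $G$ is edge-stability critical if ${\rm es}_{\chi}(G-e)<{\rm es}_{\chi}(G)$ for every edge $e$. $G$ is $(3,2)$-critical if it is edge-stability critical with $\chi(G)=3$ and ${\rm es}_{\chi}(G)=2$. *)

theory Defs
  imports Main
begin

definition simple_graph :: "'a set \<Rightarrow> 'a set set \<Rightarrow> bool" where
  "simple_graph V E \<longleftrightarrow> finite V \<and> (\<forall>e\<in>E. e \<subseteq> V \<and> card e = 2)"

definition colouring :: "'a set \<Rightarrow> 'a set set \<Rightarrow> nat \<Rightarrow> ('a \<Rightarrow> nat) \<Rightarrow> bool" where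
  "colouring V E k f \<longleftrightarrow> (\<forall>v\<in>V. f v < k) \<and> (\<forall>e\<in>E. \<forall>u\<in>e. \<forall>v\<in>e. u \<noteq> v \<longrightarrow> f u \<noteq> f v)"

definition chromatic_number :: "'a set \<Rightarrow> 'a set set \<Rightarrow> nat" where
  "chromatic_number V E = (LEAST k. \<exists>f. colouring V E k f)"

definition es_chi :: "'a set \<Rightarrow> 'a set set \<Rightarrow> nat" where
  "es_chi V E = (LEAST m. \<exists>F. F \<subseteq> E \<and> card F = m \<and>
       chromatic_number V (E - F) = chromatic_number V E - 1)"

definition edge_stability_critical :: "'a set \<Rightarrow> 'a set set \<Rightarrow> bool" where
  "edge_stability_critical V E \<longleftrightarrow> (\<forall>e\<in>E. es_chi V (E - {e}) < es_chi V E)"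

definition critical_3_2 :: "'a set \<Rightarrow> 'a set set \<Rightarrow> bool" where
  "critical_3_2 V E \<longleftrightarrow> edge_stability_critical V E \<and> chromatic_number V E = 3 \<and> es_chi V E = 2"

definition is_cycle :: "'a set set \<Rightarrow> 'a list \<Rightarrow> bool" where
  "is_cycle E vs \<longleftrightarrow> length vs \<ge> 3 \<and> distinct vs \<and>
     (\<forall>i<length vs. {vs ! i, vs ! ((i + 1) mod length vs)} \<in> E)"

definition cycle_edges :: "'a list \<Rightarrow> 'a set set" where
  "cycle_edges vs = {{vs ! i, vs ! ((i + 1) mod length vs)} | i. i < length vs}"

text \<open>Odd cycles as subgraphs, each identified by its edge set.\<close>
definition odd_cycles :: "'a set set \<Rightarrow> 'a set set set" where
  "odd_cycles E = {cycle_edges vs | vs. is_cycle E vs \<and> odd (length vs)}"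

end

theory Submission
  imports Defs
begin


lemma colouring_exists: "finite V \<Longrightarrow> \<forall>e\<in>S. e \<subseteq> V \<Longrightarrow> \<exists>k f. colouring V S k f"
proof -
  assume "finite V" and sv: "\<forall>e\<in>S. e \<subseteq> V"
  from finite_imp_inj_to_nat_seg[OF \<open>finite V\<close>]
  obtain f and n :: nat where f: "f ` V = {i. i < n}" "inj_on f V" by blast
  have "colouring V S n f"
    unfolding colouring_def
  proof (intro conjI ballI impI)
    fix v assume "v \<in> V" then show "f v < n" using f by auto
  next
    fix e u v assume "e \<in> S" "u \<in> e" "v \<in> e" "u \<noteq> v"
    then have "u \<in> V" "v \<in> V" using sv by blast+
    then show "f u \<noteq> f v" using inj_on_contraD[OF f(2) \<open>u \<noteq> v\<close>] by blast
  qed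
  then show ?thesis by blast
qed

lemma chi_col: "finite V \<Longrightarrow> \<forall>e\<in>S. e \<subseteq> V \<Longrightarrow> \<exists>f. colouring V S (chromatic_number V S) f"
proof -
  assume a: "finite V" "\<forall>e\<in>S. e \<subseteq> V"
  obtain k f where "colouring V S k f" using colouring_exists[OF a] by blast
  then have "\<exists>f. colouring V S k f" by blast
  then show ?thesis unfolding chromatic_number_def by (rule LeastI[where P="\<lambda>k. \<exists>f. colouring V S k f"])
qed

lemma chi_le: "colouring V S k f \<Longrightarrow> chromatic_number V S \<le> k"
  unfolding chromatic_number_def by (rule Least_le) blast

lemma col_mono: "colouring V S k f \<Longrightarrow> S' \<subseteq> S \<Longrightarrow> k \<le> k' \<Longrightarrow> colouring V S' k' f"
  unfolding colouring_def by (simp add: subset_iff) (meson less_le_trans)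

lemma chi_mono: "finite V \<Longrightarrow> \<forall>e\<in>S. e \<subseteq> V \<Longrightarrow> S' \<subseteq> S \<Longrightarrow> chromatic_number V S' \<le> chromatic_number V S"
proof -
  assume a: "finite V" "\<forall>e\<in>S. e \<subseteq> V" "S' \<subseteq> S"
  obtain f where "colouring V S (chromatic_number V S) f" using chi_col[OF a(1,2)] by blast
  then have "colouring V S' (chromatic_number V S) f" using col_mono a(3) by blast
  then show ?thesis by (rule chi_le)
qed

lemma chi_insert:
  assumes "finite V" "\<forall>e\<in>S. e \<subseteq> V" "e \<subseteq> V" "card e = 2"
  shows "chromatic_number V (insert e S) \<le> chromatic_number V S + 1"
proof -
  obtain f where f: "colouring V S (chromatic_number V S) f" using chi_col[OF assms(1,2)] by blast
  define k where "k = chromatic_number V S"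
  obtain u w where e: "e = {u,w}" "u \<noteq> w" using assms(4) card_2_iff by metis
  define g where "g = f(u := k)"
  have "colouring V (insert e S) (k+1) g"
    unfolding colouring_def
  proof (intro conjI ballI impI)
    fix v assume "v \<in> V" then show "g v < k + 1" using f unfolding g_def k_def colouring_def by auto
  next
    fix e' x y assume h: "e' \<in> insert e S" "x \<in> e'" "y \<in> e'" "x \<noteq> y"
    have xV: "x \<in> V" "y \<in> V" using h assms by auto
    show "g x \<noteq> g y"
    proof (cases "x = u \<or> y = u")
      case True
      then show ?thesis using h xV f unfolding g_def k_def colouring_def
        by (metis fun_upd_other fun_upd_same less_irrefl_nat)
    next
      case False
      then have "e' \<in> S" using h e by auto
      then show ?thesis using h False f unfolding g_def k_def colouring_def by auto
    qed
  qed
  then show ?thesis using chi_le k_def by blast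
qed

lemma chi_zero: "chromatic_number V S = 0 \<Longrightarrow> finite V \<Longrightarrow> \<forall>e\<in>S. e \<subseteq> V \<Longrightarrow> V = {}"
proof -
  assume a: "chromatic_number V S = 0" "finite V" "\<forall>e\<in>S. e \<subseteq> V"
  obtain f where "colouring V S (chromatic_number V S) f" using chi_col[OF a(2,3)] by blast
  then show ?thesis using a(1) unfolding colouring_def by auto
qed

lemma chi_empty: "V \<noteq> {} \<Longrightarrow> finite V \<Longrightarrow> chromatic_number V {} = 1"
proof -
  assume "V \<noteq> {}" "finite V"
  have "colouring V {} 1 (\<lambda>_. 0)" unfolding colouring_def by auto
  then have "chromatic_number V {} \<le> 1" by (rule chi_le)
  moreover have "chromatic_number V {} \<noteq> 0" using chi_zero \<open>V \<noteq> {}\<close> \<open>finite V\<close> by blast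
  ultimately show ?thesis by linarith
qed

lemma chi_ivt:
  assumes "finite V" "V \<noteq> {}" "finite S"
  shows "\<forall>e\<in>S. e \<subseteq> V \<and> card e = 2 \<Longrightarrow> 1 \<le> k \<Longrightarrow> k \<le> chromatic_number V S \<Longrightarrow> \<exists>F\<subseteq>S. chromatic_number V (S - F) = k"
  using assms(3)
proof (induction S arbitrary: k rule: finite_induct)
  case empty
  have "chromatic_number V {} = 1" by (rule chi_empty[OF assms(2,1)])
  then have "k = chromatic_number V ({} - {})" using empty by simp
  then show ?case by blast
next
  case (insert e S)
  have sv: "\<forall>e\<in>S. e \<subseteq> V" using insert by auto
  have c1: "chromatic_number V (insert e S) \<le> chromatic_number V S + 1"
    using chi_insert[OF assms(1) sv] insert by auto
  show ?case
  proof (cases "k \<le> chromatic_number V S")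
    case True
    then obtain F where F: "F \<subseteq> S" "chromatic_number V (S - F) = k" using insert by auto
    have "insert e S - insert e F = S - F" using insert(2) F by auto
    then show ?thesis using F by (metis insert_mono)
  next
    case False
    then have "k = chromatic_number V (insert e S)" using c1 insert by linarith
    then show ?thesis by (metis Diff_empty empty_subsetI)
  qed
qed



definition cutE :: "('a \<Rightarrow> bool) \<Rightarrow> 'a set set \<Rightarrow> 'a set set" where
  "cutE P S = {e\<in>S. \<exists>x\<in>e. \<exists>y\<in>e. P x \<and> \<not> P y}"

definition sd :: "'b set \<Rightarrow> 'b set \<Rightarrow> 'b set" where
  "sd A B = (A - B) \<union> (B - A)"

lemma path_parity:
  fixes q :: "nat \<Rightarrow> bool"
  shows "even (card {i. i < m \<and> q i \<noteq> q (Suc i)}) = (q 0 = q m)"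
proof (induction m)
  case 0
  then show ?case by simp
next
  case (Suc m)
  have eq: "{i. i < Suc m \<and> q i \<noteq> q (Suc i)} = {i. i < m \<and> q i \<noteq> q (Suc i)} \<union> (if q m \<noteq> q (Suc m) then {m} else {})"
    by (auto simp: less_Suc_eq)
  have fin: "finite {i. i < m \<and> q i \<noteq> q (Suc i)}" by simp
  have nm: "m \<notin> {i. i < m \<and> q i \<noteq> q (Suc i)}" by simp
  show ?case
  proof (cases "q m \<noteq> q (Suc m)")
    case True
    then have "card {i. i < Suc m \<and> q i \<noteq> q (Suc i)} = Suc (card {i. i < m \<and> q i \<noteq> q (Suc i)})"
      using eq fin nm by simp
    then show ?thesis using Suc True by auto
  next
    case False
    then show ?thesis using Suc eq by auto
  qed
qed

lemma cycle_parity: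
  fixes q :: "nat \<Rightarrow> bool"
  assumes "n > 0"
  shows "even (card {i. i < n \<and> q i \<noteq> q (Suc i mod n)})"
proof -
  obtain m where m: "n = Suc m" using assms gr0_implies_Suc by blast
  have eq: "{i. i < n \<and> q i \<noteq> q (Suc i mod n)} = {i. i < m \<and> q i \<noteq> q (Suc i)} \<union> (if q m \<noteq> q 0 then {m} else {})"
  proof -
    have h1: "\<And>i. i < m \<Longrightarrow> Suc i mod Suc m = Suc i" by simp
    have h2: "Suc m mod Suc m = 0" by simp
    show ?thesis using m by (auto simp: less_Suc_eq h1 h2)
  qed
  have fin: "finite {i. i < m \<and> q i \<noteq> q (Suc i)}" by simp
  have nm: "m \<notin> {i. i < m \<and> q i \<noteq> q (Suc i)}" by simp
  have pp: "even (card {i. i < m \<and> q i \<noteq> q (Suc i)}) = (q 0 = q m)" by (rule path_parity)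
  show ?thesis
  proof (cases "q m \<noteq> q 0")
    case True
    then have "card {i. i < n \<and> q i \<noteq> q (Suc i mod n)} = Suc (card {i. i < m \<and> q i \<noteq> q (Suc i)})"
      using eq fin nm by simp
    then show ?thesis using pp True by auto
  next
    case False
    then show ?thesis using pp eq by auto
  qed
qed

lemma suc_mod_cases: "i < n \<Longrightarrow> Suc i mod n = (if Suc i = n then 0 else Suc i)"
  by auto

lemma cyc_inj:
  assumes "is_cycle E vs"
  shows "inj_on (\<lambda>i. {vs!i, vs!(Suc i mod length vs)}) {..<length vs}"
proof (rule inj_onI)
  fix i j assume i: "i \<in> {..<length vs}" and j: "j \<in> {..<length vs}"
    and eq: "{vs!i, vs!(Suc i mod length vs)} = {vs!j, vs!(Suc j mod length vs)}"
  define n where "n = length vs"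
  have n3: "n \<ge> 3" and d: "distinct vs" using assms unfolding is_cycle_def n_def by auto
  have i': "i < n" "Suc i mod n < n" and j': "j < n" "Suc j mod n < n" using i j n3 n_def by (auto intro!: mod_less_divisor)
  have ne: "\<And>k. k < n \<Longrightarrow> Suc k mod n \<noteq> k" using n3 by (auto simp: suc_mod_cases)
  show "i = j"
  proof (rule ccontr)
    assume "i \<noteq> j"
    then have "vs!i \<noteq> vs!j" using d i' j' n_def by (simp add: nth_eq_iff_index_eq)
    then have a: "vs!i = vs!(Suc j mod n)" using eq n_def by (metis doubleton_eq_iff)
    then have b: "vs!(Suc i mod n) = vs!j" using eq n_def by (metis doubleton_eq_iff)
    from a have "i = Suc j mod n" using d i' j' n_def by (simp add: nth_eq_iff_index_eq)
    moreover from b have "j = Suc i mod n" using d i' j' n_def by (simp add: nth_eq_iff_index_eq)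
    ultimately show False using i' j' n3 by (auto simp: suc_mod_cases split: if_splits)
  qed
qed

lemma cyc_edges_img: "cycle_edges vs = (\<lambda>i. {vs!i, vs!(Suc i mod length vs)}) ` {..<length vs}"
  unfolding cycle_edges_def by auto

lemma cyc_card: "is_cycle E vs \<Longrightarrow> card (cycle_edges vs) = length vs"
  using cyc_inj[of E vs] by (simp add: cyc_edges_img card_image)

lemma cyc_sub: "is_cycle E vs \<Longrightarrow> cycle_edges vs \<subseteq> E"
  unfolding cycle_edges_def is_cycle_def by auto

lemma cyc_mono: "is_cycle E vs \<Longrightarrow> cycle_edges vs \<subseteq> S \<Longrightarrow> is_cycle S vs"
  unfolding cycle_edges_def is_cycle_def by auto

lemma cut_pair: "({a,b} \<in> cutE P S) = ({a,b} \<in> S \<and> P a \<noteq> P b)"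
  unfolding cutE_def by auto

lemma cyc_cut_even:
  assumes "is_cycle E vs"
  shows "even (card (cutE P (cycle_edges vs)))"
proof -
  define n where "n = length vs"
  define g where "g = (\<lambda>i. {vs!i, vs!(Suc i mod n)})"
  define I where "I = {i. i < n \<and> P (vs!i) \<noteq> P (vs!(Suc i mod n))}"
  have "cutE P (cycle_edges vs) = g ` I"
  proof
    show "cutE P (cycle_edges vs) \<subseteq> g ` I"
    proof
      fix e assume e: "e \<in> cutE P (cycle_edges vs)"
      then obtain i where i: "i < n" "e = g i" unfolding cutE_def cyc_edges_img g_def n_def by auto
      then have "P (vs!i) \<noteq> P (vs!(Suc i mod n))" using e cut_pair unfolding g_def by metis
      then show "e \<in> g ` I" using i I_def by auto
    qed
  next
    show "g ` I \<subseteq> cutE P (cycle_edges vs)"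
    proof
      fix e assume "e \<in> g ` I"
      then obtain i where i: "i < n" "e = g i" "P (vs!i) \<noteq> P (vs!(Suc i mod n))" unfolding I_def by auto
      then have "e \<in> cycle_edges vs" unfolding cyc_edges_img g_def n_def by auto
      then show "e \<in> cutE P (cycle_edges vs)" using i cut_pair unfolding g_def by metis
    qed
  qed
  moreover have "inj_on g I" using cyc_inj[OF assms] unfolding g_def n_def I_def
    by (rule inj_on_subset) auto
  ultimately have "card (cutE P (cycle_edges vs)) = card I" by (simp add: card_image)
  moreover have "n > 0" using assms unfolding is_cycle_def n_def by auto
  ultimately show ?thesis using cycle_parity[of n "\<lambda>i. P (vs!i)"] unfolding I_def by simp
qed

lemma cyc_not2col:
  assumes "is_cycle E vs" "odd (length vs)" "cycle_edges vs \<subseteq> S"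
    "\<forall>x\<in>set vs. c x < (2::nat)" "\<forall>e\<in>S. \<forall>x\<in>e. \<forall>y\<in>e. x \<noteq> y \<longrightarrow> c x \<noteq> c y"
  shows False
proof -
  define P where "P = (\<lambda>x. c x = 0)"
  have "cutE P (cycle_edges vs) = cycle_edges vs"
  proof
    show "cycle_edges vs \<subseteq> cutE P (cycle_edges vs)"
    proof
      fix e assume e: "e \<in> cycle_edges vs"
      then obtain i where i: "i < length vs" "e = {vs!i, vs!(Suc i mod length vs)}"
        unfolding cyc_edges_img by auto
      have n3: "length vs \<ge> 3" and d: "distinct vs" using assms(1) unfolding is_cycle_def by auto
      have lt: "Suc i mod length vs < length vs" using i by (auto intro!: mod_less_divisor)
      have "Suc i mod length vs \<noteq> i" using n3 i by (auto simp: suc_mod_cases)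
      then have ne: "vs!i \<noteq> vs!(Suc i mod length vs)" using d i lt by (simp add: nth_eq_iff_index_eq)
      have "e \<in> S" using assms(3) e by (rule subsetD)
      then have "\<forall>x\<in>e. \<forall>y\<in>e. x \<noteq> y \<longrightarrow> c x \<noteq> c y" by (rule bspec[OF assms(5)])
      then have "c (vs!i) \<noteq> c (vs!(Suc i mod length vs))" using i(2) ne by simp
      moreover have "c (vs!i) < 2" "c (vs!(Suc i mod length vs)) < 2" using assms(4) i lt by auto
      ultimately have "P (vs!i) \<noteq> P (vs!(Suc i mod length vs))" unfolding P_def by auto
      then show "e \<in> cutE P (cycle_edges vs)" using e i cut_pair by metis
    qed
  qed (auto simp: cutE_def)
  then have "even (card (cycle_edges vs))" using cyc_cut_even[OF assms(1), of P] by simp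
  then show False using cyc_card[OF assms(1)] assms(2) by simp
qed



fun walk :: "'a set set \<Rightarrow> 'a list \<Rightarrow> bool" where
  "walk Z [] = False"
| "walk Z [x] = True"
| "walk Z (x # y # xs) = ({x, y} \<in> Z \<and> walk Z (y # xs))"

lemma walk_append: "walk Z (xs @ y # ys) = (walk Z (xs @ [y]) \<and> walk Z (y # ys))"
proof (induction xs)
  case Nil
  then show ?case by simp
next
  case (Cons a xs)
  then show ?case by (cases xs) auto
qed

lemma walk_nth: "walk Z xs \<Longrightarrow> Suc i < length xs \<Longrightarrow> {xs!i, xs!Suc i} \<in> Z"
proof (induction Z xs arbitrary: i rule: walk.induct)
  case (3 Z x y xs)
  then show ?case by (cases i) auto
qed auto

lemma walk_distinct:
  "walk Z xs \<Longrightarrow> \<exists>ys. walk Z ys \<and> distinct ys \<and> hd ys = hd xs \<and> last ys = last xs"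
proof (induction "length xs" arbitrary: xs rule: less_induct)
  case less
  show ?case
  proof (cases "distinct xs")
    case True
    then show ?thesis using less.prems by blast
  next
    case False
    then obtain a b c y where xs: "xs = a @ [y] @ b @ [y] @ c" using not_distinct_decomp by blast
    have w1: "walk Z (a @ [y])" using less.prems walk_append[of Z a y "b @ [y] @ c"] xs by simp
    have w2: "walk Z (y # c)" using less.prems walk_append[of Z "a @ [y] @ b" y c] xs by simp
    have w: "walk Z (a @ [y] @ c)" using w1 w2 walk_append[of Z a y c] by simp
    have len: "length (a @ [y] @ c) < length xs" using xs by simp
    have hd: "hd (a @ [y] @ c) = hd xs" using xs by (cases a) auto
    have lst: "last (a @ [y] @ c) = last xs" using xs by (cases c) auto
    obtain ys where "walk Z ys \<and> distinct ys \<and> hd ys = hd (a @ [y] @ c) \<and> last ys = last (a @ [y] @ c)"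
      using less.hyps[OF len w] by blast
    then show ?thesis using hd lst by auto
  qed
qed

lemma reach_walk:
  assumes "(\<lambda>x y. {x, y} \<in> Z)\<^sup>*\<^sup>* u v"
  shows "\<exists>xs. walk Z xs \<and> hd xs = u \<and> last xs = v"
  using assms
proof (induction rule: converse_rtranclp_induct)
  case base
  then show ?case by (intro exI[of _ "[v]"]) simp
next
  case (step u w)
  then obtain xs where xs: "walk Z xs" "hd xs = w" "last xs = v" by blast
  then obtain xs' where "xs = w # xs'" by (cases xs) auto
  then have "walk Z (u # xs) \<and> hd (u # xs) = u \<and> last (u # xs) = v" using xs step(1) by simp
  then show ?case by blast
qed

lemma walk_colour:
  assumes "\<forall>x. c x < (2::nat)" "\<And>x y. {x, y} \<in> Z \<Longrightarrow> c x \<noteq> c y"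
  shows "walk Z xs \<Longrightarrow> c (last xs) = (c (hd xs) + (length xs - 1)) mod 2"
proof (induction xs)
  case Nil
  then show ?case by simp
next
  case (Cons x xs)
  show ?case
  proof (cases xs)
    case Nil
    then show ?thesis using assms(1) by simp
  next
    case (Cons y ys)
    then have w: "walk Z xs" and e: "{x, y} \<in> Z" using Cons.prems by auto
    then have ih: "c (last xs) = (c y + length ys) mod 2" using Cons.IH Cons by simp
    have "c x \<noteq> c y" using assms(2) e by blast
    moreover have "c x < 2" "c y < 2" using assms(1) by auto
    ultimately have "c y = (c x + 1) mod 2" by presburger
    then show ?thesis using ih Cons by (simp add: mod_add_left_eq)
  qed
qed

lemma mod2_lem: "(a::nat) < 2 \<Longrightarrow> a = (a + k) mod 2 \<Longrightarrow> even k"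
  by presburger

lemma bip:
  assumes "finite Z"
  shows "\<forall>e\<in>Z. card e = 2 \<Longrightarrow> \<not> (\<exists>vs. is_cycle Z vs \<and> odd (length vs))
    \<Longrightarrow> \<exists>c. (\<forall>x. c x < (2::nat)) \<and> (\<forall>e\<in>Z. \<forall>x\<in>e. \<forall>y\<in>e. x \<noteq> y \<longrightarrow> c x \<noteq> c y)"
  using assms
proof (induction Z rule: finite_induct)
  case empty
  show ?case by (intro exI[of _ "\<lambda>_. 0"]) simp
next
  case (insert e Z)
  have noZ: "\<not> (\<exists>vs. is_cycle Z vs \<and> odd (length vs))"
  proof
    assume "\<exists>vs. is_cycle Z vs \<and> odd (length vs)"
    then obtain vs where "is_cycle Z vs" "odd (length vs)" by blast
    then have "is_cycle (insert e Z) vs" unfolding is_cycle_def by auto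
    then show False using insert.prems(2) \<open>odd (length vs)\<close> by blast
  qed
  have cardZ: "\<forall>e\<in>Z. card e = 2" using insert.prems(1) by simp
  from insert.IH[OF cardZ noZ]
  obtain c where c: "\<forall>x. c x < (2::nat)" "\<forall>e\<in>Z. \<forall>x\<in>e. \<forall>y\<in>e. x \<noteq> y \<longrightarrow> c x \<noteq> c y"
    by blast
  have "card e = 2" using insert.prems(1) by simp
  then obtain u v where uv: "e = {u, v}" "u \<noteq> v" unfolding card_2_iff by blast
  have edge: "\<And>x y. {x, y} \<in> Z \<Longrightarrow> x \<noteq> y"
  proof -
    fix x y assume "{x, y} \<in> Z"
    then have "card {x, y} = 2" using cardZ by blast
    then show "x \<noteq> y" by (cases "x = y") auto
  qed
  have cZ: "\<And>x y. {x, y} \<in> Z \<Longrightarrow> c x \<noteq> c y"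
  proof -
    fix x y assume h: "{x, y} \<in> Z"
    then have "\<forall>a\<in>{x,y}. \<forall>b\<in>{x,y}. a \<noteq> b \<longrightarrow> c a \<noteq> c b" by (rule bspec[OF c(2)])
    then show "c x \<noteq> c y" using edge[OF h] by simp
  qed
  show ?case
  proof (cases "c u = c v")
    case False
    have "\<forall>e'\<in>insert e Z. \<forall>x\<in>e'. \<forall>y\<in>e'. x \<noteq> y \<longrightarrow> c x \<noteq> c y"
      using c(2) False uv by auto
    then show ?thesis using c(1) by blast
  next
    case True
    define R where "R = {x. (\<lambda>x y. {x, y} \<in> Z)\<^sup>*\<^sup>* u x}"
    have uR: "u \<in> R" unfolding R_def by simp
    have Rclosed: "\<And>x y. {x, y} \<in> Z \<Longrightarrow> x \<in> R \<longleftrightarrow> y \<in> R"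
    proof -
      fix x y assume h: "{x, y} \<in> Z"
      have h': "{y, x} \<in> Z" using h by (simp add: insert_commute)
      show "x \<in> R \<longleftrightarrow> y \<in> R"
        unfolding R_def using h h' by (auto intro: rtranclp.rtrancl_into_rtrancl)
    qed
    show ?thesis
    proof (cases "v \<in> R")
      case True
      then have "(\<lambda>x y. {x, y} \<in> Z)\<^sup>*\<^sup>* u v" unfolding R_def by simp
      from reach_walk[OF this] obtain xs where xs: "walk Z xs" "hd xs = u" "last xs = v"
        by blast
      from walk_distinct[OF xs(1)] obtain ps where ps0: "walk Z ps" "distinct ps" "hd ps = hd xs" "last ps = last xs"
        by blast
      have ps: "walk Z ps" "distinct ps" "hd ps = u" "last ps = v" using ps0 xs by auto
      have col: "c v = (c u + (length ps - 1)) mod 2"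
        using walk_colour[OF c(1) cZ ps(1)] ps by simp
      have ne: "ps \<noteq> []" using ps(1) by auto
      have l2: "length ps \<ge> 2"
      proof (rule ccontr)
        assume "\<not> length ps \<ge> 2"
        moreover have "length ps \<noteq> 0" using ne by simp
        ultimately have "length ps = 1" by linarith
        then have "ps = [hd ps]" by (cases ps) auto
        then have "hd ps = last ps" by (metis last.simps)
        then show False using ps uv by simp
      qed
      have cu2: "c u < 2" using c(1) by simp
      have "c u = (c u + (length ps - 1)) mod 2" using col \<open>c u = c v\<close> by linarith
      then have ev: "even (length ps - 1)" by (rule mod2_lem[OF cu2])
      have oddl: "odd (length ps)" using ev l2 ne by auto
      have l3: "length ps \<ge> 3" using l2 oddl by (cases "length ps = 2") auto
      have "is_cycle (insert e Z) ps"
        unfolding is_cycle_def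
      proof (intro conjI allI impI)
        show "3 \<le> length ps" by (rule l3)
        show "distinct ps" by (rule ps(2))
      next
        fix i assume i: "i < length ps"
        show "{ps ! i, ps ! ((i + 1) mod length ps)} \<in> insert e Z"
        proof (cases "Suc i < length ps")
          case True
          then show ?thesis using walk_nth[OF ps(1) True] by simp
        next
          case False
          then have "i = length ps - 1" using i by simp
          moreover have "ps ! (length ps - 1) = v" using ps(4) ne by (simp add: last_conv_nth)
          moreover have "ps ! 0 = u" using ps(3) ne by (simp add: hd_conv_nth)
          ultimately show ?thesis using uv ne i by (simp add: insert_commute)
        qed
      qed
      then show ?thesis using insert.prems(2) oddl by blast
    next
      case False
      define c' where "c' = (\<lambda>x. if x \<in> R then 1 - c x else c x)"
      have "\<forall>e'\<in>insert e Z. \<forall>x\<in>e'. \<forall>y\<in>e'. x \<noteq> y \<longrightarrow> c' x \<noteq> c' y"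
      proof (intro ballI impI)
        fix e' x y assume h: "e' \<in> insert e Z" "x \<in> e'" "y \<in> e'" "x \<noteq> y"
        show "c' x \<noteq> c' y"
        proof (cases "e' = e")
          case True
          then have "(x = u \<and> y = v) \<or> (x = v \<and> y = u)" using h uv by auto
          moreover have "c' u = 1 - c u" "c' v = c v" using uR False unfolding c'_def by auto
          moreover have "c u < 2" using c(1) by blast
          ultimately show ?thesis using \<open>c u = c v\<close> by (auto; arith)
        next
          case False
          then have "e' \<in> Z" using h by simp
          then have "card e' = 2" using cardZ by blast
          then have "e' = {x, y}" using h(2-4) card_2_iff by (metis doubleton_eq_iff insertE singletonD)
          then have "{x, y} \<in> Z" using \<open>e' \<in> Z\<close> by simp
          then have "c x \<noteq> c y" "x \<in> R \<longleftrightarrow> y \<in> R" using cZ Rclosed by auto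
          moreover have "c x < 2" "c y < 2" using c(1) by auto
          ultimately show ?thesis unfolding c'_def by auto
        qed
      qed
      moreover have "\<forall>x. c' x < 2" using c(1) unfolding c'_def by auto
      ultimately show ?thesis by blast
    qed
  qed
qed



lemma final_set:
  assumes "C1 \<noteq> C2" "C1 \<noteq> C3" "C2 \<noteq> C3"
    and a: "\<forall>f. \<not> (f \<in> C1 \<and> f \<in> C2 \<and> f \<in> C3)"
    and b: "\<forall>e\<in>C1 \<union> C2 \<union> C3. \<exists>f. (e \<in> C1 \<or> f \<in> C1) \<and> (e \<in> C2 \<or> f \<in> C2) \<and> (e \<in> C3 \<or> f \<in> C3)"
    and z: "C1 \<subseteq> sd (sd C1 C2) C3"
  shows False
proof -
  have h12: "C1 \<inter> C2 = {}" using a z unfolding sd_def by blast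
  have h13: "C1 \<inter> C3 = {}" using a z unfolding sd_def by blast
  obtain e where "e \<in> C2 - C3 \<or> e \<in> C3 - C2" using assms(3) by blast
  then show False
  proof
    assume e: "e \<in> C2 - C3"
    then have "e \<notin> C1" using h12 by blast
    obtain f where "(e \<in> C1 \<or> f \<in> C1) \<and> (e \<in> C2 \<or> f \<in> C2) \<and> (e \<in> C3 \<or> f \<in> C3)"
      using b e by blast
    then show False using e \<open>e \<notin> C1\<close> h13 by blast
  next
    assume e: "e \<in> C3 - C2"
    then have "e \<notin> C1" using h13 by blast
    obtain f where "(e \<in> C1 \<or> f \<in> C1) \<and> (e \<in> C2 \<or> f \<in> C2) \<and> (e \<in> C3 \<or> f \<in> C3)"
      using b e by blast
    then show False using e \<open>e \<notin> C1\<close> h12 by blast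
  qed
qed

lemma sd_parity:
  assumes "finite A" "finite B"
  shows "even (card (sd A B)) = (even (card A) = even (card B))"
proof -
  have d: "card (sd A B) = card (A - B) + card (B - A)"
    unfolding sd_def using assms by (intro card_Un_disjoint) auto
  have a: "card A = card (A - B) + card (A \<inter> B)"
    using assms by (metis Diff_Diff_Int card_Diff_subset_Int card_mono Int_lower1 Nat.add_diff_assoc2 add_diff_cancel_right' finite_Int le_add_diff_inverse2 card_Diff_subset Diff_subset Int_commute inf_le1)
  have b: "card B = card (B - A) + card (A \<inter> B)"
    using assms by (metis Int_commute card_Diff_subset_Int card_Int_Diff card_Un_disjoint Int_Diff_disjoint Un_Diff_Int finite_Int finite_Diff)
  show ?thesis using d a b by presburger
qed



lemma oc_props:
  assumes "C \<in> odd_cycles E"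
  shows "C \<subseteq> E" "finite C" "odd (card C)" "even (card (cutE P C))"
proof -
  obtain vs where vs: "C = cycle_edges vs" "is_cycle E vs" "odd (length vs)"
    using assms unfolding odd_cycles_def by blast
  show "C \<subseteq> E" using cyc_sub[OF vs(2)] vs(1) by simp
  show "finite C" unfolding vs(1) cyc_edges_img by simp
  show "odd (card C)" using cyc_card[OF vs(2)] vs by simp
  show "even (card (cutE P C))" using cyc_cut_even[OF vs(2)] vs(1) by simp
qed

lemma oc_nocol:
  assumes "C \<in> odd_cycles E" "\<forall>e\<in>E. e \<subseteq> V" "C \<subseteq> S" "colouring V S 2 c"
  shows False
proof -
  obtain vs where vs: "C = cycle_edges vs" "is_cycle E vs" "odd (length vs)"
    using assms unfolding odd_cycles_def by blast
  have "set vs \<subseteq> V"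
  proof
    fix x assume "x \<in> set vs"
    then obtain i where i: "i < length vs" "x = vs!i" by (metis in_set_conv_nth)
    then have "{vs!i, vs!((i+1) mod length vs)} \<in> E" using vs(2) unfolding is_cycle_def by blast
    then show "x \<in> V" using assms(2) i by blast
  qed
  then have "\<forall>x\<in>set vs. c x < 2" using assms(4) unfolding colouring_def by blast
  moreover have "\<forall>e\<in>S. \<forall>x\<in>e. \<forall>y\<in>e. x \<noteq> y \<longrightarrow> c x \<noteq> c y" using assms(4) unfolding colouring_def by blast
  moreover have "cycle_edges vs \<subseteq> S" using assms(3) vs(1) by simp
  ultimately show False using cyc_not2col[OF vs(2) vs(3)] by blast
qed

lemma noodd_col:
  assumes "S \<subseteq> E" "finite E" "\<forall>e\<in>E. card e = 2" "\<forall>C\<in>odd_cycles E. \<not> C \<subseteq> S"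
  shows "\<exists>c. colouring V S 2 c"
proof -
  have fS: "finite S" using assms(1,2) by (rule finite_subset)
  have cS: "\<forall>e\<in>S. card e = 2" using assms(1,3) by blast
  have no: "\<not> (\<exists>vs. is_cycle S vs \<and> odd (length vs))"
  proof
    assume "\<exists>vs. is_cycle S vs \<and> odd (length vs)"
    then obtain vs where vs: "is_cycle S vs" "odd (length vs)" by blast
    have sub: "cycle_edges vs \<subseteq> S" by (rule cyc_sub[OF vs(1)])
    then have "is_cycle E vs" using cyc_mono[OF vs(1)] assms(1) by blast
    then have "cycle_edges vs \<in> odd_cycles E" using vs(2) unfolding odd_cycles_def by blast
    then show False using assms(4) sub by blast
  qed
  from bip[OF fS cS no] obtain c where c: "\<forall>x. c x < (2::nat)" "\<forall>e\<in>S. \<forall>x\<in>e. \<forall>y\<in>e. x \<noteq> y \<longrightarrow> c x \<noteq> c y"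
    by blast
  have "colouring V S 2 c" unfolding colouring_def using c by blast
  then show ?thesis by blast
qed

theorem theorem2p4:
  fixes V :: "'a set" and E :: "'a set set"
  assumes "simple_graph V E"
    and "critical_3_2 V E"
  shows "card (odd_cycles E) \<noteq> 3"
proof
  assume card3: "card (odd_cycles E) = 3"
  define OC where "OC = odd_cycles E"
  have fV: "finite V" and eV: "\<forall>e\<in>E. e \<subseteq> V" and c2: "\<forall>e\<in>E. card e = 2"
    using assms(1) unfolding simple_graph_def by auto
  have fE: "finite E"
  proof -
    have "E \<subseteq> Pow V" using eV by blast
    then show ?thesis using fV by (metis finite_Pow_iff finite_subset)
  qed
  have chi3: "chromatic_number V E = 3" and es2: "es_chi V E = 2"
    and crit: "\<forall>e\<in>E. es_chi V (E - {e}) < es_chi V E"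
    using assms(2) unfolding critical_3_2_def edge_stability_critical_def by auto
  have subV: "\<And>S. S \<subseteq> E \<Longrightarrow> \<forall>e\<in>S. e \<subseteq> V" using eV by blast
  have chi_del: "\<And>f. f \<in> E \<Longrightarrow> chromatic_number V (E - {f}) \<ge> 2"
  proof -
    fix f assume f: "f \<in> E"
    have "chromatic_number V (insert f (E - {f})) \<le> chromatic_number V (E - {f}) + 1"
      using chi_insert[OF fV subV[of "E - {f}"]] f eV c2 by blast
    moreover have "insert f (E - {f}) = E" using f by blast
    ultimately show "chromatic_number V (E - {f}) \<ge> 2" using chi3 by simp
  qed
  have col_le2: "\<And>S. S \<subseteq> E \<Longrightarrow> chromatic_number V S \<le> 2 \<Longrightarrow> \<exists>c. colouring V S 2 c"
  proof -
    fix S assume S: "S \<subseteq> E" "chromatic_number V S \<le> 2"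
    from chi_col[OF fV subV[OF S(1)]] obtain c where "colouring V S (chromatic_number V S) c" by blast
    then have "colouring V S 2 c" using col_mono S(2) by blast
    then show "\<exists>c. colouring V S 2 c" by blast
  qed
  have pa: "\<forall>f\<in>E. \<exists>C\<in>OC. f \<notin> C"
  proof
    fix f assume f: "f \<in> E"
    show "\<exists>C\<in>OC. f \<notin> C"
    proof (rule ccontr)
      assume "\<not> (\<exists>C\<in>OC. f \<notin> C)"
      then have "\<forall>C\<in>odd_cycles E. \<not> C \<subseteq> E - {f}" unfolding OC_def by blast
      from noodd_col[OF _ fE c2 this] obtain c where "colouring V (E - {f}) 2 c" by blast
      then have "chromatic_number V (E - {f}) \<le> 2" by (rule chi_le)
      then have eq: "chromatic_number V (E - {f}) = chromatic_number V E - 1" using chi_del[OF f] chi3 by simp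
      have "{f} \<subseteq> E \<and> card {f} = 1 \<and> chromatic_number V (E - {f}) = chromatic_number V E - 1"
        using f eq by simp
      then have "es_chi V E \<le> 1" unfolding es_chi_def by (intro Least_le) blast
      then show False using es2 by simp
    qed
  qed
  have pb: "\<forall>e\<in>E. \<exists>f. \<forall>C\<in>OC. e \<in> C \<or> f \<in> C"
  proof
    fix e assume e: "e \<in> E"
    define S where "S = E - {e}"
    have S: "S \<subseteq> E" unfolding S_def by blast
    have fS: "finite S" using fE S by (rule finite_subset[rotated])
    have ge2: "chromatic_number V S \<ge> 2" unfolding S_def by (rule chi_del[OF e])
    have Vne: "V \<noteq> {}" using e eV c2 by fastforce
    have cS: "\<forall>e\<in>S. e \<subseteq> V \<and> card e = 2" using S eV c2 by blast
    have k1: "1 \<le> chromatic_number V S - 1" using ge2 by simp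
    have k2: "chromatic_number V S - 1 \<le> chromatic_number V S" by simp
    from chi_ivt[OF fV Vne fS cS k1 k2]
    obtain F where F: "F \<subseteq> S" "chromatic_number V (S - F) = chromatic_number V S - 1" by blast
    let ?P = "\<lambda>m. \<exists>F. F \<subseteq> S \<and> card F = m \<and> chromatic_number V (S - F) = chromatic_number V S - 1"
    have "?P (card F)" using F by blast
    then have "?P (LEAST m. ?P m)" by (rule LeastI)
    then obtain F0 where F0: "F0 \<subseteq> S" "card F0 = es_chi V S"
      "chromatic_number V (S - F0) = chromatic_number V S - 1"
      unfolding es_chi_def by blast
    have lt: "card F0 < 2" using F0(2) crit e unfolding S_def using es2 by auto
    have fF0: "finite F0" using F0(1) fS by (rule finite_subset)
    have "chromatic_number V S \<le> 3" using chi_mono[OF fV eV S] chi3 by simp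
    then have "chromatic_number V (S - F0) \<le> 2" using F0(3) by simp
    from col_le2[OF _ this] obtain c where c: "colouring V (S - F0) 2 c" using S by blast
    have hit: "\<forall>C\<in>OC. \<not> C \<subseteq> S - F0"
    proof
      fix C assume "C \<in> OC"
      show "\<not> C \<subseteq> S - F0"
      proof
        assume "C \<subseteq> S - F0"
        then show False using oc_nocol[OF _ eV _ c] \<open>C \<in> OC\<close> unfolding OC_def by blast
      qed
    qed
    have "F0 \<noteq> {}"
    proof
      assume "F0 = {}"
      then show False using F0(3) ge2 by simp
    qed
    then obtain f where f: "F0 = {f}" using lt fF0
      by (metis One_nat_def card_1_singleton_iff card_gt_0_iff less_2_cases_iff less_irrefl)
    have "\<forall>C\<in>OC. e \<in> C \<or> f \<in> C"
    proof
      fix C assume C: "C \<in> OC"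
      then have "C \<subseteq> E" unfolding OC_def by (rule oc_props)
      then show "e \<in> C \<or> f \<in> C" using hit C f unfolding S_def by blast
    qed
    then show "\<exists>f. \<forall>C\<in>OC. e \<in> C \<or> f \<in> C" by blast
  qed
  obtain C1 C2 C3 where OC3: "OC = {C1, C2, C3}" "C1 \<noteq> C2" "C2 \<noteq> C3" "C1 \<noteq> C3"
    using card3 unfolding OC_def card_3_iff by blast
  have CO: "C1 \<in> OC" "C2 \<in> OC" "C3 \<in> OC" using OC3 by auto
  have sub: "C1 \<subseteq> E" "C2 \<subseteq> E" "C3 \<subseteq> E" using CO oc_props(1) unfolding OC_def by blast+
  have fin: "finite C1" "finite C2" "finite C3" using CO oc_props(2) unfolding OC_def by blast+
  have odd: "odd (card C1)" "odd (card C2)" "odd (card C3)" using CO oc_props(3) unfolding OC_def by blast+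
  have a3: "\<forall>f. \<not> (f \<in> C1 \<and> f \<in> C2 \<and> f \<in> C3)"
  proof (intro allI notI)
    fix f assume h: "f \<in> C1 \<and> f \<in> C2 \<and> f \<in> C3"
    then have "f \<in> E" using sub by blast
    then obtain C where "C \<in> OC" "f \<notin> C" using pa by blast
    then show False using h OC3(1) by blast
  qed
  have b3: "\<forall>e\<in>C1 \<union> C2 \<union> C3. \<exists>f. (e \<in> C1 \<or> f \<in> C1) \<and> (e \<in> C2 \<or> f \<in> C2) \<and> (e \<in> C3 \<or> f \<in> C3)"
  proof
    fix e assume "e \<in> C1 \<union> C2 \<union> C3"
    then have "e \<in> E" using sub by blast
    then obtain f where "\<forall>C\<in>OC. e \<in> C \<or> f \<in> C" using pb by blast
    then show "\<exists>f. (e \<in> C1 \<or> f \<in> C1) \<and> (e \<in> C2 \<or> f \<in> C2) \<and> (e \<in> C3 \<or> f \<in> C3)" using CO by blast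
  qed
  define Z where "Z = sd (sd C1 C2) C3"
  have ZE: "Z \<subseteq> E" unfolding Z_def sd_def using sub by blast
  have f12: "finite (sd C1 C2)" unfolding sd_def using fin by blast
  have oddZ: "odd (card Z)" unfolding Z_def using sd_parity[OF f12 fin(3)] sd_parity[OF fin(1,2)] odd by simp
  have "\<exists>C\<in>odd_cycles E. C \<subseteq> Z"
  proof (rule ccontr)
    assume "\<not> (\<exists>C\<in>odd_cycles E. C \<subseteq> Z)"
    then have "\<forall>C\<in>odd_cycles E. \<not> C \<subseteq> Z" by blast
    from noodd_col[OF ZE fE c2 this] obtain c where c: "colouring V Z 2 c" by blast
    define P where "P = (\<lambda>x. c x = (0::nat))"
    have cutZ: "cutE P Z = Z"
    proof
      show "Z \<subseteq> cutE P Z"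
      proof
        fix e assume eZ: "e \<in> Z"
        then have "e \<in> E" using ZE by blast
        then obtain x y where xy: "e = {x, y}" "x \<noteq> y" using c2 card_2_iff by metis
        have "x \<in> V" "y \<in> V" using xy \<open>e \<in> E\<close> eV by blast+
        then have "c x < 2" "c y < 2" using c unfolding colouring_def by blast+
        moreover have "\<forall>a\<in>e. \<forall>b\<in>e. a \<noteq> b \<longrightarrow> c a \<noteq> c b"
          using c unfolding colouring_def by (metis eZ)
        then have "c x \<noteq> c y" using xy by simp
        ultimately have "P x \<noteq> P y" unfolding P_def by auto
        then show "e \<in> cutE P Z" using eZ xy cut_pair by metis
      qed
    qed (auto simp: cutE_def)
    have ceq: "cutE P Z = sd (sd (cutE P C1) (cutE P C2)) (cutE P C3)"
      unfolding Z_def cutE_def sd_def by blast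
    have fc: "finite (cutE P C1)" "finite (cutE P C2)" "finite (cutE P C3)"
      using fin unfolding cutE_def by auto
    have ev: "even (card (cutE P C1))" "even (card (cutE P C2))" "even (card (cutE P C3))"
      using CO oc_props(4) unfolding OC_def by blast+
    have f12': "finite (sd (cutE P C1) (cutE P C2))" unfolding sd_def using fc by blast
    have "even (card (cutE P Z))" unfolding ceq
      using sd_parity[OF f12' fc(3)] sd_parity[OF fc(1,2)] ev by simp
    then show False using oddZ cutZ by simp
  qed
  then obtain C where C: "C \<in> OC" "C \<subseteq> Z" unfolding OC_def by blast
  then have "C = C1 \<or> C = C2 \<or> C = C3" using OC3 by blast
  then show False
  proof (elim disjE)
    assume "C = C1"
    then show False using final_set[OF OC3(2) OC3(4) OC3(3) a3 b3] C(2) unfolding Z_def by blast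
  next
    assume "C = C2"
    have "C2 \<subseteq> sd (sd C2 C1) C3" using C(2) \<open>C = C2\<close> unfolding Z_def sd_def by blast
    moreover have "\<forall>f. \<not> (f \<in> C2 \<and> f \<in> C1 \<and> f \<in> C3)" using a3 by blast
    moreover have "\<forall>e\<in>C2 \<union> C1 \<union> C3. \<exists>f. (e \<in> C2 \<or> f \<in> C2) \<and> (e \<in> C1 \<or> f \<in> C1) \<and> (e \<in> C3 \<or> f \<in> C3)"
      using b3 by blast
    ultimately show False using final_set[of C2 C1 C3] OC3 by blast
  next
    assume "C = C3"
    have "C3 \<subseteq> sd (sd C3 C1) C2" using C(2) \<open>C = C3\<close> unfolding Z_def sd_def by blast
    moreover have "\<forall>f. \<not> (f \<in> C3 \<and> f \<in> C1 \<and> f \<in> C2)" using a3 by blast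
    moreover have "\<forall>e\<in>C3 \<union> C1 \<union> C2. \<exists>f. (e \<in> C3 \<or> f \<in> C3) \<and> (e \<in> C1 \<or> f \<in> C1) \<and> (e \<in> C2 \<or> f \<in> C2)"
      using b3 by blast
    ultimately show False using final_set[of C3 C1 C2] OC3 by blast
  qed
qed



end
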